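(* Assume $r(\boldsymbol\gamma)\le 1<2+\alpha\le R(\boldsymbol\gamma)$. Let $(\mathbf A^\ddagger,\mathbf q^\ddagger)$ maximize $\Pi$ over $\mathcal A\times\mathbb R^n_{\ge0}$, and let $(\mathbf A^{\rm d},\mathbf q^{\rm d})$ be an equilibrium with $\mathbf A^{\rm d}\mathbf q^{\rm d}=\boldsymbol\beta$ and $\mathbf q^{\rm d}=\boldsymbol\gamma/(2+\alpha)$. Then $\Omega(\mathbf A^{\rm d},\mathbf q^{\rm d})<\Omega(\mathbf A^\ddagger,\mathbf q^\ddagger)$ if and only if $\|\boldsymbol\gamma\|_2>\dfrac{2+\alpha}{\sqrt{4+3\alpha}}$.
   Context: Model: integers $n\ge2$, $m\ge2$; $\alpha>0$, $\boldsymbol\beta\in\mathbb R^m$ with $\|\boldsymbol\beta\|_2=1$, $\boldsymbol\gamma\in\mathbb R^n$ with all $\gamma_i>0$. $\mathcal A$ is the set of real $m\times n$ matrices $\mathbf A=[\mathbf a_1,\dots,\mathbf a_n]$ with all $\|\mathbf a_i\|_2=1$. With $\mathbf x=\mathbf A\mathbf q$: total surplus $\Omega(\mathbf A,\mathbf q)=\alpha(\mathbf x^\top\boldsymbol\beta-\tfrac12\mathbf x^\top\mathbf x)+\mathbf q^\top\boldsymbol\gamma-\tfrac12\mathbf q^\top\mathbf q$; aggregate profit $\Pi(\mathbf A,\mathbf q)=\alpha(\mathbf x^\top\boldsymbol\beta-\mathbf x^\top\mathbf x)+\mathbf q^\top\boldsymbol\gamma-\mathbf q^\top\mathbf q$.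 Oligopoly: firm $i$ chooses unit $\mathbf a_i$ and $q_i\ge0$ to maximize $\Pi_i=\alpha q_i\mathbf a_i^\top(\boldsymbol\beta-\sum_{j\ne i}q_j\mathbf a_j)-(1+\alpha)q_i^2+\gamma_iq_i$ given others; an equilibrium is a profile of mutual best responses. $R(\mathbf v)=\|\mathbf v\|_1$, $r(\mathbf v)=2\|\mathbf v\|_\infty-\|\mathbf v\|_1$. *)

theory Defs
  imports "HOL-Analysis.Analysis"
begin

text \<open>Matrices A are m x n, i.e. of type real^'n^'m; column i is the firm's unit a_i.\<close>

definition unit_cols :: "real^'n^'m \<Rightarrow> bool" where
  "unit_cols A \<longleftrightarrow> (\<forall>i. norm (column i A) = 1)"

definition nonneg_vec :: "real^'n \<Rightarrow> bool" where
  "nonneg_vec q \<longleftrightarrow> (\<forall>i. q $ i \<ge> 0)"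

definition surplus :: "real \<Rightarrow> real^'m \<Rightarrow> real^'n \<Rightarrow> real^'n^'m \<Rightarrow> real^'n \<Rightarrow> real" where
  "surplus \<alpha> \<beta> \<gamma> A q =
     (let x = A *v q in \<alpha> * (x \<bullet> \<beta> - (1/2) * (x \<bullet> x)) + q \<bullet> \<gamma> - (1/2) * (q \<bullet> q))"

definition agg_profit :: "real \<Rightarrow> real^'m \<Rightarrow> real^'n \<Rightarrow> real^'n^'m \<Rightarrow> real^'n \<Rightarrow> real" where
  "agg_profit \<alpha> \<beta> \<gamma> A q =
     (let x = A *v q in \<alpha> * (x \<bullet> \<beta> - x \<bullet> x) + q \<bullet> \<gamma> - q \<bullet> q)"

definition firm_profit :: "real \<Rightarrow> real^'m \<Rightarrow> real^'n \<Rightarrow> real^'n^'m \<Rightarrow> real^'n \<Rightarrow> 'n \<Rightarrow> real^'m \<Rightarrow> real \<Rightarrow> real" where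
  "firm_profit \<alpha> \<beta> \<gamma> A q i a qi =
     \<alpha> * qi * (a \<bullet> (\<beta> - (\<Sum>j\<in>UNIV - {i}. q $ j *\<^sub>R column j A)))
     - (1 + \<alpha>) * qi\<^sup>2 + \<gamma> $ i * qi"

definition is_equilibrium :: "real \<Rightarrow> real^'m \<Rightarrow> real^'n \<Rightarrow> real^'n^'m \<Rightarrow> real^'n \<Rightarrow> bool" where
  "is_equilibrium \<alpha> \<beta> \<gamma> A q \<longleftrightarrow> unit_cols A \<and> nonneg_vec q \<and>
     (\<forall>i a qi. norm a = 1 \<and> qi \<ge> 0 \<longrightarrow>
        firm_profit \<alpha> \<beta> \<gamma> A q i a qi \<le> firm_profit \<alpha> \<beta> \<gamma> A q i (column i A) (q $ i))"

definition norm1 :: "real^'n \<Rightarrow> real" where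
  "norm1 v = (\<Sum>i\<in>UNIV. \<bar>v $ i\<bar>)"

definition norm_inf :: "real^'n \<Rightarrow> real" where
  "norm_inf v = Max (range (\<lambda>i. \<bar>v $ i\<bar>))"

definition R_fun :: "real^'n \<Rightarrow> real" where "R_fun v = norm1 v"
definition r_fun :: "real^'n \<Rightarrow> real" where "r_fun v = 2 * norm_inf v - norm1 v"

end

theory Submission imports Defs begin

lemma tri_exists:
  fixes L0 w L :: real
  assumes "L0 \<ge> 0" "w > 0" "\<bar>L0 - w\<bar> \<le> L" "L \<le> L0 + w"
  shows "\<exists>z::complex. norm z = 1 \<and> cmod (of_real L0 + of_real w * z) = L"
proof (cases "L0 = 0")
  case True
  then show ?thesis using assms by (intro exI[of _ 1]) auto
next
  case False
  hence L0p: "L0 > 0" using assms by simp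
  define c where "c = (L^2 - L0^2 - w^2) / (2 * L0 * w)"
  have L0: "L \<ge> 0" using assms by linarith
  have sq1: "L^2 \<le> (L0 + w)^2" using assms L0 power_mono[of L "L0+w" 2] by blast
  have sq2: "(L0 - w)^2 \<le> L^2" using assms power_mono[of "\<bar>L0 - w\<bar>" L 2] by simp
  have pos: "2 * L0 * w > 0" using L0p assms by simp
  have e1: "L^2 - L0^2 - w^2 \<le> 2 * L0 * w" using sq1 by (simp add: power2_sum)
  have e2: "-(2 * L0 * w) \<le> L^2 - L0^2 - w^2" using sq2 by (simp add: power2_diff)
  have c1: "c \<le> 1" unfolding c_def using e1 pos by (simp add: divide_le_eq)
  have c2: "-1 \<le> c" unfolding c_def using e2 pos by (simp add: le_divide_eq)
  have cc: "c^2 \<le> 1" using c1 c2 by (metis abs_le_iff abs_square_le_1 minus_le_iff)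
  define z where "z = Complex c (sqrt (1 - c^2))"
  have nz: "norm z = 1" unfolding z_def cmod_def using cc by simp
  have "(cmod (of_real L0 + of_real w * z))^2 = (L0 + w*c)^2 + (w * sqrt (1 - c^2))^2"
    unfolding z_def cmod_def by (simp add: complex_of_real_def)
  also have "\<dots> = L0^2 + 2*L0*w*c + w^2" using cc by (simp add: power2_eq_square algebra_simps power_mult_distrib)
  also have "\<dots> = L^2"
  proof -
    have nz0: "2*L0*w \<noteq> 0" using pos by linarith
    have "2*L0*w*c = L^2 - L0^2 - w^2" unfolding c_def using nz0 by (simp only: times_divide_eq_right nonzero_mult_div_cancel_left[OF nz0])
    thus ?thesis by simp
  qed
  finally have "(cmod (of_real L0 + of_real w * z))^2 = L^2" .
  hence "cmod (of_real L0 + of_real w * z) = L" using L0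
    by (metis norm_ge_zero power2_eq_imp_eq)
  thus ?thesis using nz by blast
qed

lemma poly_exists:
  fixes w :: "'a \<Rightarrow> real"
  assumes "finite S" "S \<noteq> {}" "\<forall>i\<in>S. w i > 0"
  shows "\<forall>L. max 0 (2 * Max (w ` S) - sum w S) \<le> L \<and> L \<le> sum w S \<longrightarrow>
     (\<exists>z. (\<forall>i\<in>S. norm (z i) = 1) \<and> (\<Sum>i\<in>S. complex_of_real (w i) * z i) = complex_of_real L)"
  using assms
proof (induction S rule: finite_ne_induct)
  case (singleton a)
  show ?case
  proof (intro allI impI)
    fix L assume "max 0 (2 * Max (w ` {a}) - sum w {a}) \<le> L \<and> L \<le> sum w {a}"
    hence "L = w a" by auto
    thus "\<exists>z. (\<forall>i\<in>{a}. norm (z i) = 1) \<and> (\<Sum>i\<in>{a}. complex_of_real (w i) * z i) = complex_of_real L"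
      by (intro exI[of _ "\<lambda>_. 1"]) auto
  qed
next
  case (insert a S)
  define M where "M = Max (w ` S)"
  define Rr where "Rr = sum w S"
  have MS: "M \<le> Rr" and Mp: "M > 0"
  proof -
    have "M \<in> w ` S" unfolding M_def using insert by simp
    then obtain j where "j \<in> S" "M = w j" by auto
    thus "M \<le> Rr" unfolding Rr_def using insert
      using member_le_sum[of j S w] by (simp add: less_imp_le)
    show "M > 0" using \<open>j \<in> S\<close> \<open>M = w j\<close> insert by simp
  qed
  have Mins: "Max (w ` insert a S) = max (w a) M" unfolding M_def using insert by simp
  have Sins: "sum w (insert a S) = w a + Rr" unfolding Rr_def using insert by simp
  have wa: "w a > 0" using insert by simp
  show ?case
  proof (intro allI impI)
    fix L assume "max 0 (2 * Max (w ` insert a S) - sum w (insert a S)) \<le> L \<and> L \<le> sum w (insert a S)"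
    hence b: "0 \<le> L" "2 * max (w a) M - (w a + Rr) \<le> L" "L \<le> w a + Rr" using Mins Sins by auto
    define L0 where "L0 = max (max 0 (2*M - Rr)) \<bar>L - w a\<bar>"
    have L0a: "max 0 (2*M - Rr) \<le> L0" "L0 \<le> Rr" "\<bar>L0 - w a\<bar> \<le> L" "L \<le> L0 + w a" "L0 \<ge> 0"
    proof -
      have m1: "2 * w a - (w a + Rr) \<le> L" "2 * M - (w a + Rr) \<le> L"
        using b(2) by (smt (verit))+
      show "max 0 (2*M - Rr) \<le> L0" unfolding L0_def by simp
      show "L0 \<le> Rr" unfolding L0_def using b m1 MS Mp by (smt (verit))
      show "\<bar>L0 - w a\<bar> \<le> L" unfolding L0_def using b m1 MS Mp wa by (smt (verit))
      show "L \<le> L0 + w a" unfolding L0_def using b m1 MS Mp by (smt (verit))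
      show "L0 \<ge> 0" unfolding L0_def by simp
    qed
    obtain z where z: "\<forall>i\<in>S. norm (z i) = 1" "(\<Sum>i\<in>S. complex_of_real (w i) * z i) = complex_of_real L0"
      using insert.IH insert.prems L0a unfolding M_def Rr_def by auto
    obtain u where u: "norm u = 1" "cmod (of_real L0 + of_real (w a) * u) = L"
      using tri_exists[OF L0a(5) wa L0a(3) L0a(4)] by blast
    define V where "V = of_real L0 + of_real (w a) * u"
    define rot where "rot = (if V = 0 then 1 else of_real L / V)"
    have rotn: "norm rot = 1" using u unfolding rot_def V_def by (auto simp: norm_divide)
    have rotV: "rot * V = of_real L" using u unfolding rot_def V_def by auto
    define z' where "z' = (\<lambda>i. rot * (if i = a then u else z i))"
    have "\<forall>i\<in>insert a S. norm (z' i) = 1" unfolding z'_def using z u rotn by (auto simp: norm_mult)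
    moreover have "(\<Sum>i\<in>insert a S. complex_of_real (w i) * z' i) = of_real L"
    proof -
      have "(\<Sum>i\<in>insert a S. complex_of_real (w i) * z' i) =
            complex_of_real (w a) * z' a + (\<Sum>i\<in>S. complex_of_real (w i) * z' i)"
        using insert by simp
      also have "(\<Sum>i\<in>S. complex_of_real (w i) * z' i) = rot * (\<Sum>i\<in>S. complex_of_real (w i) * z i)"
        unfolding z'_def sum_distrib_left using insert by (intro sum.cong) auto
      also have "complex_of_real (w a) * z' a = rot * (of_real (w a) * u)" unfolding z'_def by simp
      finally have "(\<Sum>i\<in>insert a S. complex_of_real (w i) * z' i) = rot * V"
        using z unfolding V_def by (simp add: algebra_simps)
      thus ?thesis using rotV by simp
    qed
    ultimately show "\<exists>z. (\<forall>i\<in>insert a S. norm (z i) = 1) \<and> (\<Sum>i\<in>insert a S. complex_of_real (w i) * z i) = complex_of_real L" by blast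
  qed
qed

lemma final_ineq:
  fixes \<alpha> g n :: real
  assumes "\<alpha> > 0" "n \<ge> 0" "g = n^2"
  shows "(\<alpha>/2 + g/(2+\<alpha>) - g/(2*(2+\<alpha>)^2) < 3*\<alpha>/8 + 3*g/8) \<longleftrightarrow> n > (2 + \<alpha>) / sqrt (4 + 3 * \<alpha>)"
proof -
  define s where "s = 2 + \<alpha>"
  have sp: "s > 0" using assms unfolding s_def by simp
  have "(\<alpha>/2 + g/(2+\<alpha>) - g/(2*(2+\<alpha>)^2) < 3*\<alpha>/8 + 3*g/8) \<longleftrightarrow>
        ((\<alpha>/2 + g/s - g/(2* s^2)) * (8* s^2) < (3*\<alpha>/8 + 3*g/8) * (8* s^2))"
    unfolding s_def using sp s_def by (simp add: mult_less_cancel_right)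
  also have "\<dots> \<longleftrightarrow> 4*\<alpha>* s^2 + 8*g* s - 4*g < 3*\<alpha>* s^2 + 3*g* s^2"
  proof -
    have "(\<alpha>/2 + g/s - g/(2 * s^2)) * (8 * s^2) = 4*\<alpha> * s^2 + 8*g * s - 4*g"
      using sp by (simp add: field_simps power2_eq_square)
    moreover have "(3*\<alpha>/8 + 3*g/8) * (8 * s^2) = 3*\<alpha> * s^2 + 3*g * s^2"
      by (simp add: field_simps)
    ultimately show ?thesis by simp
  qed
  also have "\<dots> \<longleftrightarrow> \<alpha>* s^2 < \<alpha> * (g*(4+3*\<alpha>))"
    unfolding s_def by (simp add: algebra_simps power2_eq_square)
  also have "\<dots> \<longleftrightarrow> s^2 < g*(4+3*\<alpha>)" using assms by simp
  also have "\<dots> \<longleftrightarrow> (s / sqrt (4+3*\<alpha>))^2 < n^2"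
    using assms by (simp add: power_divide divide_less_eq)
  also have "\<dots> \<longleftrightarrow> s / sqrt (4+3*\<alpha>) < n"
  proof -
    have a0: "s / sqrt (4+3*\<alpha>) \<ge> 0" using sp assms by simp
    show ?thesis
    proof
      assume "(s / sqrt (4+3*\<alpha>))^2 < n^2"
      thus "s / sqrt (4+3*\<alpha>) < n" using power_less_imp_less_base assms(2) by blast
    next
      assume "s / sqrt (4+3*\<alpha>) < n"
      thus "(s / sqrt (4+3*\<alpha>))^2 < n^2" using power_strict_mono[of _ _ 2] a0 by simp
    qed
  qed
  finally show ?thesis unfolding s_def .
qed

lemma exists_orth:
  fixes \<beta> :: "real^'m"
  assumes "CARD('m) \<ge> 2"
  obtains e where "norm e = 1" "e \<bullet> \<beta> = 0"
proof -
  have "dim {\<beta>} < DIM(real^'m)" using assms by simp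
  then obtain x :: "real^'m" where x: "x \<noteq> 0" "\<And>y. y \<in> span {\<beta>} \<Longrightarrow> orthogonal x y"
    using orthogonal_to_subspace_exists[of "{\<beta>}"] by blast
  have "orthogonal x \<beta>" using x(2) span_base[of \<beta> "{\<beta>}"] by simp
  hence "x \<bullet> \<beta> = 0" by (simp add: orthogonal_def)
  moreover have "norm (x /\<^sub>R norm x) = 1" using x(1) by simp
  ultimately show ?thesis using that[of "x /\<^sub>R norm x"] by simp
qed

lemma profit_identity:
  fixes x \<beta> :: "real^'m" and q \<gamma> :: "real^'n"
  assumes "\<beta> \<bullet> \<beta> = 1"
  shows "\<alpha> * (x \<bullet> \<beta> - x \<bullet> x) + q \<bullet> \<gamma> - q \<bullet> q =
    \<alpha> * (1/4 - (x - (1/2) *\<^sub>R \<beta>) \<bullet> (x - (1/2) *\<^sub>R \<beta>)) + (\<gamma> \<bullet> \<gamma>)/4 - (q - (1/2) *\<^sub>R \<gamma>) \<bullet> (q - (1/2) *\<^sub>R \<gamma>)"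
  using assms by (simp add: inner_diff_left inner_diff_right inner_commute algebra_simps)

theorem theorem2:
  fixes \<alpha> :: real and \<beta> :: "real^'m" and \<gamma> :: "real^'n"
    and Ad :: "real^'n^'m" and qd :: "real^'n" and Am :: "real^'n^'m" and qm :: "real^'n"
  assumes "CARD('n) \<ge> 2" and "CARD('m) \<ge> 2"
    and "\<alpha> > 0" and "norm \<beta> = 1" and "\<forall>i. \<gamma> $ i > 0"
    and "r_fun \<gamma> \<le> 1" and "1 < 2 + \<alpha>" and "2 + \<alpha> \<le> R_fun \<gamma>"
    and "unit_cols Am" and "nonneg_vec qm"
    and "\<forall>A q. unit_cols A \<and> nonneg_vec q \<longrightarrow> agg_profit \<alpha> \<beta> \<gamma> A q \<le> agg_profit \<alpha> \<beta> \<gamma> Am qm"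
    and "is_equilibrium \<alpha> \<beta> \<gamma> Ad qd"
    and "Ad *v qd = \<beta>" and "qd = (1 / (2 + \<alpha>)) *\<^sub>R \<gamma>"
  shows "surplus \<alpha> \<beta> \<gamma> Ad qd < surplus \<alpha> \<beta> \<gamma> Am qm \<longleftrightarrow>
         norm \<gamma> > (2 + \<alpha>) / sqrt (4 + 3 * \<alpha>)"
proof -
  note ap = assms(3)
  have bb: "\<beta> \<bullet> \<beta> = 1" using assms(4) by (metis norm_eq_1)
  obtain e :: "real^'m" where e: "norm e = 1" "e \<bullet> \<beta> = 0" using exists_orth assms(2) by blast
  have ee: "e \<bullet> e = 1" using e(1) by (metis norm_eq_1)
  have eb: "\<beta> \<bullet> e = 0" using e(2) by (simp add: inner_commute)
  define g where "g = \<gamma> \<bullet> \<gamma>"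
  have absg: "(\<lambda>i. \<bar>\<gamma> $ i\<bar>) = (\<lambda>i. \<gamma> $ i)" using assms(5) by (simp add: abs_of_pos)
  have lo: "max 0 (2 * Max ((\<lambda>i. \<gamma> $ i) ` UNIV) - sum (\<lambda>i. \<gamma> $ i) UNIV) \<le> 1"
    using assms(6) unfolding r_fun_def norm_inf_def norm1_def absg by simp
  have hi: "1 \<le> sum (\<lambda>i. \<gamma> $ i) UNIV"
    using assms(8) ap unfolding R_fun_def norm1_def absg by simp
  obtain z where z: "\<forall>i\<in>UNIV. norm (z i) = 1"
      "(\<Sum>i\<in>UNIV. complex_of_real (\<gamma> $ i) * z i) = complex_of_real 1"
  proof -
    have "\<forall>L. max 0 (2 * Max ((\<lambda>i. \<gamma> $ i) ` UNIV) - sum (\<lambda>i. \<gamma> $ i) UNIV) \<le> L \<and> L \<le> sum (\<lambda>i. \<gamma> $ i) UNIV \<longrightarrow>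
     (\<exists>z. (\<forall>i\<in>UNIV. norm (z i) = 1) \<and> (\<Sum>i\<in>UNIV. complex_of_real (\<gamma> $ i) * z i) = complex_of_real L)"
      using poly_exists[of UNIV "\<lambda>i. \<gamma> $ i"] assms(5) by simp
    from spec[OF this, of 1] lo hi show ?thesis using that by blast
  qed
  define A0 :: "real^'n^'m" where "A0 = (\<chi> k j. Re (z j) * \<beta> $ k + Im (z j) * e $ k)"
  define q0 where "q0 = (1/2) *\<^sub>R \<gamma>"
  have colA0: "column j A0 = Re (z j) *\<^sub>R \<beta> + Im (z j) *\<^sub>R e" for j
    unfolding A0_def column_def by (simp add: vec_eq_iff)
  have uA0: "unit_cols A0" unfolding unit_cols_def
  proof
    fix j
    have "(column j A0) \<bullet> (column j A0) = (Re (z j))^2 + (Im (z j))^2"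
      unfolding colA0 using bb ee eb e(2)
      by (simp add: inner_add_left inner_add_right power2_eq_square)
    also have "\<dots> = 1" using z(1) by (metis cmod_power2 one_power2 UNIV_I)
    finally show "norm (column j A0) = 1" by (metis norm_eq_1)
  qed
  have nq0: "nonneg_vec q0" unfolding nonneg_vec_def q0_def using assms(5) by (simp add: less_imp_le)
  have sRe: "(\<Sum>j\<in>UNIV. \<gamma> $ j * Re (z j)) = 1"
    using arg_cong[OF z(2), of Re] by (simp add: Re_sum)
  have sIm: "(\<Sum>j\<in>UNIV. \<gamma> $ j * Im (z j)) = 0"
    using arg_cong[OF z(2), of Im] by (simp add: Im_sum)
  have xA0: "A0 *v q0 = (1/2) *\<^sub>R \<beta>"
  proof (subst vec_eq_iff, intro allI)
    fix k
    have "(A0 *v q0) $ k = (\<Sum>j\<in>UNIV. (Re (z j) * \<beta> $ k + Im (z j) * e $ k) * (\<gamma> $ j / 2))"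
      unfolding A0_def q0_def matrix_vector_mult_def by simp
    also have "\<dots> = (\<beta> $ k / 2) * (\<Sum>j\<in>UNIV. \<gamma> $ j * Re (z j)) + (e $ k / 2) * (\<Sum>j\<in>UNIV. \<gamma> $ j * Im (z j))"
      by (simp add: sum_distrib_left sum.distrib algebra_simps)
    also have "\<dots> = \<beta> $ k / 2" using sRe sIm by simp
    finally show "(A0 *v q0) $ k = ((1/2) *\<^sub>R \<beta>) $ k" by simp
  qed
  have P0: "agg_profit \<alpha> \<beta> \<gamma> A0 q0 = \<alpha>/4 + g/4"
    unfolding agg_profit_def Let_def xA0 unfolding q0_def g_def using bb by (simp add: algebra_simps)
  define x where "x = Am *v qm"
  have Pm: "agg_profit \<alpha> \<beta> \<gamma> Am qm \<ge> \<alpha>/4 + g/4" using assms(11) uA0 nq0 P0 by metis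
  define DA where "DA = (x - (1/2) *\<^sub>R \<beta>) \<bullet> (x - (1/2) *\<^sub>R \<beta>)"
  define DB where "DB = (qm - (1/2) *\<^sub>R \<gamma>) \<bullet> (qm - (1/2) *\<^sub>R \<gamma>)"
  have "agg_profit \<alpha> \<beta> \<gamma> Am qm = \<alpha> * (1/4 - DA) + g/4 - DB"
    unfolding agg_profit_def Let_def x_def[symmetric] g_def DA_def DB_def by (rule profit_identity[OF bb])
  also have "\<dots> = \<alpha>/4 + g/4 - (\<alpha> * DA + DB)" by (simp add: right_diff_distrib)
  finally have le0: "\<alpha> * DA + DB \<le> 0" using Pm by linarith
  have DA0: "DA \<ge> 0" "DB \<ge> 0" unfolding DA_def DB_def by simp_all
  have "\<alpha> * DA \<ge> 0" using ap DA0 by simp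
  hence "DB = 0" "\<alpha> * DA = 0" using le0 DA0 by linarith+
  hence "DA = 0" "DB = 0" using ap by simp_all
  hence xm: "x = (1/2) *\<^sub>R \<beta>" and qmv: "qm = (1/2) *\<^sub>R \<gamma>" unfolding DA_def DB_def by simp_all
  have Sm: "surplus \<alpha> \<beta> \<gamma> Am qm = 3*\<alpha>/8 + 3*g/8"
    unfolding surplus_def Let_def x_def[symmetric] unfolding xm unfolding qmv g_def using bb by simp
  have Sd: "surplus \<alpha> \<beta> \<gamma> Ad qd = \<alpha>/2 + g/(2+\<alpha>) - g/(2*(2+\<alpha>)^2)"
  proof -
    have "surplus \<alpha> \<beta> \<gamma> Ad qd = \<alpha> * (1 - 1/2) + qd \<bullet> \<gamma> - (1/2) * (qd \<bullet> qd)"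
      unfolding surplus_def Let_def assms(13) using bb by simp
    also have "qd \<bullet> \<gamma> = g/(2+\<alpha>)" unfolding assms(14) g_def by simp
    also have "qd \<bullet> qd = g/(2+\<alpha>)^2" unfolding assms(14) g_def by (simp add: power2_eq_square)
    finally show ?thesis by simp
  qed
  show ?thesis unfolding Sm Sd
    by (rule final_ineq[OF ap norm_ge_zero]) (simp add: g_def power2_norm_eq_inner)
qed

end
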